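(* Let $G$ be a connected graph on $[n+1]$ such that $NC_G$ is graded. Then the max-min edge labeling is an $S_n$ EL-labeling of $NC_G$ if and only if $G$ is perfectly labeled.
   Context: Graphs are finite simple graphs with vertex set $[n+1]$; edges are written $ij$ with $i<j$. $G$ is perfectly labeled if whenever $ik,jk\in E(G)$ with $i<j<k$, also $ij\in E(G)$. A bond of $G$ is a spanning subgraph (identified with its edge set) each of whose connected components is an induced subgraph of $G$; it is noncrossing if there are no two distinct components with vertex sets $B,B'$ and $a,c\in B$, $b,d\in B'$, $a<b<c<d$. $NC_G$ is the poset of noncrossing bonds ordered by inclusion of edge sets. When $G$ is connected and $NC_G$ is graded, each cover $H\lessdot H'$ merges exactly two components (blocks) $B,B'$ of $H$ into one; the max-min edge labeling assigns to it the label $\max\{\min B,\min B'\}-1$. An EL-labeling: every interval has a unique maximal chain with strictly increasing labels, and it lexicographically precedes every other maximal chain of the interval. An $S_n$ EL-labeling is an EL-labeling of a poset of rank $n$ in which the labels along every maximal chain form a permutation of $[n]$ (with the natural order on $[n]$). *)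

theory Defs
  imports Main
begin

text \<open>A graph on the vertex set {1..n+1} is given by its edge set; an edge ij with i<j
  is represented by the pair (i,j).\<close>

definition is_graph :: "nat \<Rightarrow> (nat \<times> nat) set \<Rightarrow> bool" where
  "is_graph n G \<longleftrightarrow> (\<forall>(i,j)\<in>G. 1 \<le> i \<and> i < j \<and> j \<le> n + 1)"

definition conn :: "(nat \<times> nat) set \<Rightarrow> (nat \<times> nat) set" where
  "conn H = (H \<union> H\<inverse>)\<^sup>*"

definition graph_connected :: "nat \<Rightarrow> (nat \<times> nat) set \<Rightarrow> bool" where
  "graph_connected n G \<longleftrightarrow> (\<forall>u\<in>{1..n+1}. \<forall>v\<in>{1..n+1}. (u, v) \<in> conn G)"

definition perfectly_labeled :: "(nat \<times> nat) set \<Rightarrow> bool" where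
  "perfectly_labeled G \<longleftrightarrow>
     (\<forall>i j k. (i,k) \<in> G \<and> (j,k) \<in> G \<and> i < j \<and> j < k \<longrightarrow> (i,j) \<in> G)"

definition blocks :: "nat \<Rightarrow> (nat \<times> nat) set \<Rightarrow> nat set set" where
  "blocks n H = (\<lambda>v. conn H `` {v}) ` {1..n+1}"

text \<open>A bond: a spanning subgraph each of whose components is an induced subgraph of G,
  i.e. every edge of G joining two vertices of the same component of H lies in H.\<close>
definition is_bond :: "nat \<Rightarrow> (nat \<times> nat) set \<Rightarrow> (nat \<times> nat) set \<Rightarrow> bool" where
  "is_bond n G H \<longleftrightarrow> H \<subseteq> G \<and>
     (\<forall>B\<in>blocks n H. \<forall>(i,j)\<in>G. i \<in> B \<and> j \<in> B \<longrightarrow> (i,j) \<in> H)"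

definition noncrossing :: "nat \<Rightarrow> (nat \<times> nat) set \<Rightarrow> bool" where
  "noncrossing n H \<longleftrightarrow>
     \<not> (\<exists>B\<in>blocks n H. \<exists>B'\<in>blocks n H. B \<noteq> B' \<and>
          (\<exists>a b c d. a \<in> B \<and> c \<in> B \<and> b \<in> B' \<and> d \<in> B' \<and> a < b \<and> b < c \<and> c < d))"

text \<open>NC_G, ordered by inclusion of edge sets (the order on sets).\<close>
definition NC :: "nat \<Rightarrow> (nat \<times> nat) set \<Rightarrow> (nat \<times> nat) set set" where
  "NC n G = {H. is_bond n G H \<and> noncrossing n H}"

text \<open>Max-min edge label of a cover H < H': the blocks of H that are not blocks of H'
  are the two merged blocks B, B'; the label is max{min B, min B'} - 1.\<close>
definition maxmin_label :: "nat \<Rightarrow> (nat \<times> nat) set \<Rightarrow> (nat \<times> nat) set \<Rightarrow> nat" where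
  "maxmin_label n H H' = Max (Min ` (blocks n H - blocks n H')) - 1"

definition covers :: "'a::order set \<Rightarrow> 'a \<Rightarrow> 'a \<Rightarrow> bool" where
  "covers P x y \<longleftrightarrow> x \<in> P \<and> y \<in> P \<and> x < y \<and> \<not> (\<exists>z\<in>P. x < z \<and> z < y)"

definition max_chain_interval :: "'a::order set \<Rightarrow> 'a \<Rightarrow> 'a \<Rightarrow> 'a list \<Rightarrow> bool" where
  "max_chain_interval P x y c \<longleftrightarrow>
     c \<noteq> [] \<and> set c \<subseteq> P \<and> successively (covers P) c \<and> hd c = x \<and> last c = y"

definition maximal_chain :: "'a::order set \<Rightarrow> 'a list \<Rightarrow> bool" where
  "maximal_chain P c \<longleftrightarrow>
     c \<noteq> [] \<and> set c \<subseteq> P \<and> successively (covers P) c \<and>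
     \<not> (\<exists>z\<in>P. z < hd c) \<and> \<not> (\<exists>z\<in>P. last c < z)"

definition graded :: "'a::order set \<Rightarrow> bool" where
  "graded P \<longleftrightarrow> finite P \<and>
     (\<forall>c c'. maximal_chain P c \<longrightarrow> maximal_chain P c' \<longrightarrow> length c = length c')"

definition chain_labels :: "('a \<Rightarrow> 'a \<Rightarrow> 'l) \<Rightarrow> 'a list \<Rightarrow> 'l list" where
  "chain_labels lab c = map (\<lambda>(a, b). lab a b) (zip c (tl c))"

definition EL_labeling :: "'a::order set \<Rightarrow> ('a \<Rightarrow> 'a \<Rightarrow> 'l::linorder) \<Rightarrow> bool" where
  "EL_labeling P lab \<longleftrightarrow>
     (\<forall>x\<in>P. \<forall>y\<in>P. x \<le> y \<longrightarrow>
        (\<exists>!c. max_chain_interval P x y c \<and> sorted_wrt (<) (chain_labels lab c)) \<and>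
        (\<forall>c c'. max_chain_interval P x y c \<and> sorted_wrt (<) (chain_labels lab c) \<and>
                max_chain_interval P x y c' \<and> c' \<noteq> c \<longrightarrow>
                ord_class.lexordp (chain_labels lab c) (chain_labels lab c')))"

definition Sn_EL_labeling :: "nat \<Rightarrow> 'a::order set \<Rightarrow> ('a \<Rightarrow> 'a \<Rightarrow> nat) \<Rightarrow> bool" where
  "Sn_EL_labeling n P lab \<longleftrightarrow> EL_labeling P lab \<and>
     (\<forall>c. maximal_chain P c \<longrightarrow>
        length c = n + 1 \<and> distinct (chain_labels lab c) \<and> set (chain_labels lab c) = {1..n})"

end

theory Submission
  imports Defs
begin


lemma conn_refl[simp]: "(u,u) \<in> conn H" by (simp add: conn_def)

lemma conn_sym: "(u,v) \<in> conn H \<Longrightarrow> (v,u) \<in> conn H"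
  unfolding conn_def
  by (metis converse_Un converse_converse rtrancl_converseI sup_commute)

lemma conn_trans: "(u,v) \<in> conn H \<Longrightarrow> (v,w) \<in> conn H \<Longrightarrow> (u,w) \<in> conn H"
  unfolding conn_def by (rule rtrancl_trans)

lemma conn_base: "(u,v) \<in> H \<Longrightarrow> (u,v) \<in> conn H"
  unfolding conn_def by auto

lemma conn_base': "(u,v) \<in> H \<Longrightarrow> (v,u) \<in> conn H"
  using conn_base conn_sym by blast

lemma conn_mono: "H \<subseteq> H' \<Longrightarrow> conn H \<subseteq> conn H'"
  unfolding conn_def by (rule rtrancl_mono) auto

lemma conn_least:
  assumes "H \<subseteq> R" "H\<inverse> \<subseteq> R" "\<And>u. (u,u) \<in> R" "trans R"
  shows "conn H \<subseteq> R"
proof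
  fix p assume "p \<in> conn H"
  obtain u v where p: "p = (u,v)" by (cases p)
  have "(u,v) \<in> (H \<union> H\<inverse>)\<^sup>*" using \<open>p \<in> conn H\<close> p unfolding conn_def by simp
  then have "(u,v) \<in> R"
  proof (induction rule: rtrancl_induct)
    case base then show ?case using assms(3) .
  next
    case (step y z) then show ?case using assms(1,2,4) by (meson UnE subsetD transD)
  qed
  then show "p \<in> R" using p by simp
qed

lemma conn_class_eq: "(u,v) \<in> conn H \<Longrightarrow> conn H `` {u} = conn H `` {v}"
  using conn_sym conn_trans by blast

definition rng :: "nat \<Rightarrow> nat set" where "rng n = {1..n+1}"

lemma conn_range:
  assumes "is_graph n G" "H \<subseteq> G" "(u,v) \<in> conn H" "u \<noteq> v"
  shows "u \<in> {1..n+1} \<and> v \<in> {1..n+1}"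
proof -
  let ?R = "Id \<union> ({1..n+1} \<times> {1..n+1})"
  have HG: "\<And>i j. (i,j) \<in> H \<Longrightarrow> i \<in> {1..n+1} \<and> j \<in> {1..n+1}"
    using assms(1,2) unfolding is_graph_def by fastforce
  have "conn H \<subseteq> ?R"
    apply (rule conn_least)
    using HG unfolding trans_def by auto
  then show ?thesis using assms(3,4) by auto
qed

lemma class_sub:
  assumes "is_graph n G" "H \<subseteq> G" "v \<in> {1..n+1}"
  shows "conn H `` {v} \<subseteq> {1..n+1}"
  using conn_range[OF assms(1,2)] assms(3) by fastforce

lemma class_finite:
  assumes "is_graph n G" "H \<subseteq> G"
  shows "finite (conn H `` {v})"
proof -
  have "conn H `` {v} \<subseteq> insert v {1..n+1}"
    using conn_range[OF assms(1,2)] by fastforce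
  then show ?thesis by (meson finite_atLeastAtMost finite_insert finite_subset)
qed

lemma bond_iff:
  assumes "is_graph n G"
  shows "is_bond n G H \<longleftrightarrow> H = G \<inter> conn H"
proof
  assume b: "is_bond n G H"
  then have HG: "H \<subseteq> G" by (simp add: is_bond_def)
  have "G \<inter> conn H \<subseteq> H"
  proof
    fix e assume e: "e \<in> G \<inter> conn H"
    obtain i j where ij: "e = (i,j)" by (cases e)
    have "i \<in> {1..n+1}" using e ij assms unfolding is_graph_def by auto
    then have B: "conn H `` {i} \<in> blocks n H" unfolding blocks_def by auto
    have "i \<in> conn H `` {i}" "j \<in> conn H `` {i}" using e ij by auto
    then show "e \<in> H" using b B e ij unfolding is_bond_def by blast
  qed
  moreover have "H \<subseteq> G \<inter> conn H" using HG conn_base by auto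
  ultimately show "H = G \<inter> conn H" by (rule antisym[rotated])
next
  assume h: "H = G \<inter> conn H"
  show "is_bond n G H" unfolding is_bond_def
  proof (intro conjI ballI impI)
    show "H \<subseteq> G" using h by blast
  next
    fix B e assume B: "B \<in> blocks n H" and e: "e \<in> G"
    obtain i j where ij: "e = (i,j)" by (cases e)
    obtain v where B': "B = conn H `` {v}" using B unfolding blocks_def by auto
    have "i \<in> B \<and> j \<in> B \<longrightarrow> (i, j) \<in> H"
    proof
      assume "i \<in> B \<and> j \<in> B"
      then have "(v,i) \<in> conn H" "(v,j) \<in> conn H" using B' by auto
      then have "(i,j) \<in> conn H" using conn_sym conn_trans by blast
      then have "(i,j) \<in> G \<inter> conn H" using e ij by simp
      then show "(i,j) \<in> H" using h by simp
    qed
    then show "case e of (i, j) \<Rightarrow> i \<in> B \<and> j \<in> B \<longrightarrow> (i, j) \<in> H"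
      using ij by simp
  qed
qed

definition NCR :: "(nat \<times> nat) set \<Rightarrow> bool" where
  "NCR R \<longleftrightarrow> \<not> (\<exists>a b c d. a < b \<and> b < c \<and> c < d \<and> (a,c) \<in> R \<and> (b,d) \<in> R \<and> (a,b) \<notin> R)"

lemma nc_iff:
  assumes "is_graph n G" "H \<subseteq> G"
  shows "noncrossing n H \<longleftrightarrow> NCR (conn H)"
proof
  assume nc: "noncrossing n H"
  show "NCR (conn H)" unfolding NCR_def
  proof
    assume "\<exists>a b c d. a < b \<and> b < c \<and> c < d \<and> (a,c) \<in> conn H \<and> (b,d) \<in> conn H \<and> (a,b) \<notin> conn H"
    then obtain a b c d where w: "a < b" "b < c" "c < d" "(a,c) \<in> conn H" "(b,d) \<in> conn H" "(a,b) \<notin> conn H"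
      by blast
    have ra: "a \<in> {1..n+1}" using conn_range[OF assms w(4)] w by auto
    have rb: "b \<in> {1..n+1}" using conn_range[OF assms w(5)] w by auto
    have B1: "conn H `` {a} \<in> blocks n H" using ra unfolding blocks_def by auto
    have B2: "conn H `` {b} \<in> blocks n H" using rb unfolding blocks_def by auto
    have ne: "conn H `` {a} \<noteq> conn H `` {b}"
    proof
      assume "conn H `` {a} = conn H `` {b}"
      moreover have "b \<in> conn H `` {b}" by simp
      ultimately have "b \<in> conn H `` {a}" by simp
      then show False using w(6) by simp
    qed
    have X: "a \<in> conn H``{a} \<and> c \<in> conn H``{a} \<and> b \<in> conn H``{b} \<and> d \<in> conn H``{b} \<and> a<b \<and> b<c \<and> c<d"
      using w by auto
    have "\<exists>B\<in>blocks n H. \<exists>B'\<in>blocks n H. B \<noteq> B' \<and>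
          (\<exists>a b c d. a \<in> B \<and> c \<in> B \<and> b \<in> B' \<and> d \<in> B' \<and> a < b \<and> b < c \<and> c < d)"
      apply (rule bexI[OF _ B1], rule bexI[OF _ B2], rule conjI[OF ne])
      using X by blast
    then show False using nc unfolding noncrossing_def by blast
  qed
next
  assume N: "NCR (conn H)"
  show "noncrossing n H" unfolding noncrossing_def
  proof
    assume "\<exists>B\<in>blocks n H. \<exists>B'\<in>blocks n H. B \<noteq> B' \<and>
          (\<exists>a b c d. a \<in> B \<and> c \<in> B \<and> b \<in> B' \<and> d \<in> B' \<and> a < b \<and> b < c \<and> c < d)"
    then obtain v w a b c d where w: "conn H `` {v} \<noteq> conn H `` {w}"
      "a \<in> conn H `` {v}" "c \<in> conn H `` {v}" "b \<in> conn H `` {w}" "d \<in> conn H `` {w}"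
      "a < b" "b < c" "c < d"
      unfolding blocks_def by blast
    have "(a,c) \<in> conn H" using w conn_sym conn_trans by blast
    moreover have "(b,d) \<in> conn H" using w conn_sym conn_trans by blast
    moreover have "(a,b) \<notin> conn H"
    proof
      assume "(a,b) \<in> conn H"
      then have "(v,w) \<in> conn H" using w conn_sym conn_trans by blast
      then show False using w(1) conn_class_eq by blast
    qed
    ultimately show False using N w unfolding NCR_def by blast
  qed
qed

lemma NC_iff:
  assumes "is_graph n G"
  shows "H \<in> NC n G \<longleftrightarrow> H = G \<inter> conn H \<and> NCR (conn H)"
proof -
  have "H = G \<inter> conn H \<Longrightarrow> H \<subseteq> G" by blast
  then show ?thesis unfolding NC_def using bond_iff[OF assms] nc_iff[OF assms] by (auto simp: is_bond_def)
qed



definition mins :: "nat \<Rightarrow> (nat \<times> nat) set \<Rightarrow> nat set" where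
  "mins n H = {v \<in> {1..n+1}. \<forall>u. (v,u) \<in> conn H \<longrightarrow> v \<le> u}"

definition rep :: "(nat \<times> nat) set \<Rightarrow> nat \<Rightarrow> nat" where
  "rep H v = Min (conn H `` {v})"

lemma rep_props:
  assumes "is_graph n G" "H \<subseteq> G" "v \<in> {1..n+1}"
  shows "rep H v \<in> mins n H \<and> (v, rep H v) \<in> conn H \<and> rep H v \<le> v"
proof -
  have fin: "finite (conn H `` {v})" using class_finite[OF assms(1,2)] .
  have vin: "v \<in> conn H `` {v}" by simp
  then have ne: "conn H `` {v} \<noteq> {}" by blast
  have r1: "rep H v \<in> conn H `` {v}" unfolding rep_def using Min_in[OF fin ne] .
  have r2: "rep H v \<le> v" unfolding rep_def using Min_le[OF fin vin] .
  have r3: "rep H v \<in> {1..n+1}" using class_sub[OF assms] r1 by blast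
  have r4: "\<forall>u. (rep H v, u) \<in> conn H \<longrightarrow> rep H v \<le> u"
  proof (intro allI impI)
    fix u assume "(rep H v, u) \<in> conn H"
    then have "u \<in> conn H `` {v}" using r1 conn_trans by blast
    then show "rep H v \<le> u" unfolding rep_def using Min_le[OF fin] by blast
  qed
  show ?thesis using r1 r2 r3 r4 unfolding mins_def by auto
qed

lemma mins_le: "u \<in> mins n H \<Longrightarrow> (u,v) \<in> conn H \<Longrightarrow> u \<le> v"
  unfolding mins_def by blast

lemma mins_eq: "u \<in> mins n H \<Longrightarrow> v \<in> mins n H \<Longrightarrow> (u,v) \<in> conn H \<Longrightarrow> u = v"
proof -
  assume a: "u \<in> mins n H" "v \<in> mins n H" "(u,v) \<in> conn H"
  have "u \<le> v" using mins_le[OF a(1) a(3)] .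
  moreover have "v \<le> u" using mins_le[OF a(2) conn_sym[OF a(3)]] .
  ultimately show "u = v" by simp
qed

lemma mins_range: "u \<in> mins n H \<Longrightarrow> u \<in> {1..n+1}"
  unfolding mins_def by blast

lemma mins_mono: "conn H \<subseteq> conn H' \<Longrightarrow> mins n H' \<subseteq> mins n H"
  unfolding mins_def by blast

lemma minsI: "v \<in> {1..n+1} \<Longrightarrow> (\<And>u. (v,u) \<in> conn H \<Longrightarrow> v \<le> u) \<Longrightarrow> v \<in> mins n H"
  unfolding mins_def by blast

definition Eb :: "(nat \<times> nat) set \<Rightarrow> nat \<Rightarrow> (nat \<times> nat) set" where
  "Eb H M = {(a,b). ((a,b) \<in> H \<or> (b,a) \<in> H) \<and> a \<le> M \<and> b \<le> M}"

lemma red: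
  assumes pl: "perfectly_labeled H" and inc: "\<And>a b. (a,b) \<in> H \<Longrightarrow> a < b"
    and uM: "u < M" and vM: "v < M" and uv: "(u,v) \<in> (Eb H M)\<^sup>*"
  shows "(u,v) \<in> (Eb H (M-1))\<^sup>*"
proof -
  have sub: "\<And>a b. (a,b) \<in> Eb H M \<Longrightarrow> a < M \<Longrightarrow> b < M \<Longrightarrow> (a,b) \<in> Eb H (M-1)"
    unfolding Eb_def by auto
  have "w \<le> M \<and> (w < M \<longrightarrow> (u,w) \<in> (Eb H (M-1))\<^sup>*) \<and>
        (w = M \<longrightarrow> (\<exists>t<M. (u,t) \<in> (Eb H (M-1))\<^sup>* \<and> (t,M) \<in> H))"
    if "(u,w) \<in> (Eb H M)\<^sup>*" for w
    using that
  proof (induction rule: rtrancl_induct)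
    case base then show ?case using uM by auto
  next
    case (step w w')
    have w'M: "w' \<le> M" using step(2) unfolding Eb_def by auto
    have wM: "w \<le> M" using step(3) by blast
    show ?case
    proof (cases "w < M")
      case True
      note wu = step(3)[THEN conjunct2, THEN conjunct1, rule_format, OF True]
      show ?thesis
      proof (cases "w' < M")
        case True
        have "(u,w') \<in> (Eb H (M-1))\<^sup>*"
          by (rule rtrancl.rtrancl_into_rtrancl[OF wu sub[OF step(2) \<open>w < M\<close> True]])
        then show ?thesis using True w'M by simp
      next
        case False
        then have "w' = M" using w'M by simp
        then have "(w, M) \<in> H" using step(2) True inc unfolding Eb_def by fastforce
        then show ?thesis using wu True \<open>w' = M\<close> by auto
      qed
    next
      case False
      then have wE: "w = M" using wM by simp
      then obtain t where t: "t < M" "(u,t) \<in> (Eb H (M-1))\<^sup>*" "(t,M) \<in> H" using step(3) by blast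
      show ?thesis
      proof (cases "w' < M")
        case True
        then have w'H: "(w', M) \<in> H" using step(2) wE inc unfolding Eb_def by fastforce
        have "(u,w') \<in> (Eb H (M-1))\<^sup>*"
        proof (cases "t = w'")
          case True then show ?thesis using t by simp
        next
          case False
          have "(t,w') \<in> Eb H (M-1)"
          proof (cases "t < w'")
            case True
            then have "(t,w') \<in> H" using pl t(3) w'H \<open>w' < M\<close> unfolding perfectly_labeled_def by blast
            then show ?thesis using t(1) \<open>w' < M\<close> unfolding Eb_def by auto
          next
            case False
            then have "w' < t" using \<open>t \<noteq> w'\<close> by simp
            then have "(w',t) \<in> H" using pl t(3) w'H t(1) unfolding perfectly_labeled_def by blast
            then show ?thesis using t(1) \<open>w' < M\<close> unfolding Eb_def by auto
          qed
          then show ?thesis using t(2) by (meson rtrancl.rtrancl_into_rtrancl)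
        qed
        then show ?thesis using True w'M by simp
      next
        case False
        then have "w' = M" using w'M by simp
        then show ?thesis using t wE by auto
      qed
    qed
  qed
  then show ?thesis using uv vM by blast
qed

lemma red_iter:
  assumes pl: "perfectly_labeled H" and inc: "\<And>a b. (a,b) \<in> H \<Longrightarrow> a < b"
    and uv: "u < v"
  shows "(u,v) \<in> (Eb H (v+d))\<^sup>* \<Longrightarrow> (u,v) \<in> (Eb H v)\<^sup>*"
proof (induction d)
  case 0 then show ?case by simp
next
  case (Suc d)
  have "(u,v) \<in> (Eb H (v + Suc d - 1))\<^sup>*"
    by (rule red[OF pl inc _ _ Suc.prems]) (use uv in auto)
  then show ?case using Suc.IH by simp
qed

lemma lower_nb_gen:
  assumes pl: "perfectly_labeled H" and inc: "\<And>a b. (a,b) \<in> H \<Longrightarrow> a < b \<and> b \<le> N"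
    and uv: "(u,v) \<in> conn H" and lt: "u < v"
  shows "\<exists>p. (p,v) \<in> H"
proof -
  have inc': "\<And>a b. (a,b) \<in> H \<Longrightarrow> a < b" using inc by blast
  have "H \<union> H\<inverse> \<subseteq> Eb H (v+N)" unfolding Eb_def using inc by fastforce
  then have "conn H \<subseteq> (Eb H (v+N))\<^sup>*" unfolding conn_def by (rule rtrancl_mono)
  then have "(u,v) \<in> (Eb H (v+N))\<^sup>*" using uv by blast
  then have "(u,v) \<in> (Eb H v)\<^sup>*" using red_iter[OF pl inc' lt] by blast
  then show ?thesis
  proof (cases rule: rtranclE)
    case base then show ?thesis using lt by simp
  next
    case (step w)
    then have "(w,v) \<in> H \<or> ((v,w) \<in> H \<and> w \<le> v)" unfolding Eb_def by auto
    then show ?thesis using inc' by fastforce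
  qed
qed

lemma lower_nb:
  assumes G: "is_graph n G" and pl: "perfectly_labeled G" and y: "y = G \<inter> conn y"
    and uv: "(u,v) \<in> conn y" and lt: "u < v"
  shows "\<exists>p. (p,v) \<in> y"
proof -
  have ply: "perfectly_labeled y" unfolding perfectly_labeled_def
  proof (intro allI impI)
    fix i j k assume a: "(i, k) \<in> y \<and> (j, k) \<in> y \<and> i < j \<and> j < k"
    then have "(i,j) \<in> G" using pl y unfolding perfectly_labeled_def by blast
    moreover have "(i,j) \<in> conn y"
    proof -
      have "(i,k) \<in> conn y" using a conn_base by blast
      moreover have "(k,j) \<in> conn y" using a conn_base' by blast
      ultimately show ?thesis by (rule conn_trans)
    qed
    ultimately show "(i,j) \<in> y" using y by blast
  qed
  have inc: "\<And>a b. (a,b) \<in> y \<Longrightarrow> a < b \<and> b \<le> n+1"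
    using G y unfolding is_graph_def by fastforce
  show ?thesis by (rule lower_nb_gen[OF ply inc uv lt])
qed



definition Sab :: "(nat \<times> nat) set \<Rightarrow> nat \<Rightarrow> nat \<Rightarrow> nat set" where
  "Sab x a b = conn x `` {a} \<union> conn x `` {b}"

definition mrg :: "(nat \<times> nat) set \<Rightarrow> (nat \<times> nat) set \<Rightarrow> nat \<Rightarrow> nat \<Rightarrow> (nat \<times> nat) set" where
  "mrg G x a b = G \<inter> (conn x \<union> (Sab x a b \<times> Sab x a b))"

locale mrg_setup =
  fixes n :: nat and G x :: "(nat \<times> nat) set" and a b p q :: nat
  assumes G: "is_graph n G" and x: "x = G \<inter> conn x"
    and a: "a \<in> mins n x" and b: "b \<in> mins n x" and ab: "a \<noteq> b"
    and ap: "(a,p) \<in> conn x" and bq: "(b,q) \<in> conn x" and pq: "(p,q) \<in> G \<or> (q,p) \<in> G"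
begin

abbreviation "S \<equiv> Sab x a b"
abbreviation "z \<equiv> mrg G x a b"
abbreviation "R' \<equiv> conn x \<union> (S \<times> S)"

lemma xG: "x \<subseteq> G" using x by blast

lemma ab_nc: "(a,b) \<notin> conn x" using mins_eq[OF a b] ab by blast

lemma aS: "a \<in> S" and bS: "b \<in> S" unfolding Sab_def by auto

lemma S_cases: "u \<in> S \<Longrightarrow> (a,u) \<in> conn x \<or> (b,u) \<in> conn x"
  unfolding Sab_def by auto

lemma S_closed: "u \<in> S \<Longrightarrow> (u,v) \<in> conn x \<Longrightarrow> v \<in> S"
  unfolding Sab_def using conn_trans by blast

lemma S_closed': "v \<in> S \<Longrightarrow> (u,v) \<in> conn x \<Longrightarrow> u \<in> S"
  using S_closed conn_sym by blast

lemma R'_trans: "trans R'"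
proof (rule transI)
  fix u v w assume 1: "(u,v) \<in> R'" and 2: "(v,w) \<in> R'"
  show "(u,w) \<in> R'"
  proof (cases "(u,v) \<in> conn x")
    case True
    show ?thesis
    proof (cases "(v,w) \<in> conn x")
      case True then show ?thesis using \<open>(u,v) \<in> conn x\<close> conn_trans by blast
    next
      case False then have "v \<in> S" "w \<in> S" using 2 by auto
      then have "u \<in> S" using S_closed' True by blast
      then show ?thesis using \<open>w \<in> S\<close> by blast
    qed
  next
    case False then have "u \<in> S" "v \<in> S" using 1 by auto
    show ?thesis
    proof (cases "(v,w) \<in> conn x")
      case True then have "w \<in> S" using S_closed \<open>v \<in> S\<close> by blast
      then show ?thesis using \<open>u \<in> S\<close> by blast
    next
      case False then have "w \<in> S" using 2 by auto
      then show ?thesis using \<open>u \<in> S\<close> by blast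
    qed
  qed
qed

lemma z_sub: "z \<subseteq> R'" unfolding mrg_def by blast

lemma conn_z_sub: "conn z \<subseteq> R'"
proof (rule conn_least)
  show "z \<subseteq> R'" by (rule z_sub)
  show "z\<inverse> \<subseteq> R'" using z_sub conn_sym by blast
  show "\<And>u. (u,u) \<in> R'" by simp
  show "trans R'" by (rule R'_trans)
qed

lemma x_sub_z: "x \<subseteq> z"
proof -
  have "x \<subseteq> G \<inter> conn x" using x by simp
  then show ?thesis unfolding mrg_def by blast
qed

lemma pS: "p \<in> S" and qS: "q \<in> S" unfolding Sab_def using ap bq by auto

lemma pq_z: "(p,q) \<in> conn z"
proof -
  have "(p,q) \<in> z \<or> (q,p) \<in> z" using pq pS qS unfolding mrg_def by blast
  then show ?thesis using conn_base conn_base' by blast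
qed

lemma conn_x_z: "conn x \<subseteq> conn z" using conn_mono[OF x_sub_z] .

lemma S_p: "u \<in> S \<Longrightarrow> (u,p) \<in> conn z"
proof -
  assume u: "u \<in> S"
  show ?thesis
  proof (cases "(a,u) \<in> conn x")
    case True
    then have "(u,p) \<in> conn x" using ap conn_sym conn_trans by blast
    then show ?thesis using conn_x_z by blast
  next
    case False
    then have "(b,u) \<in> conn x" using S_cases u by blast
    then have "(u,q) \<in> conn x" using bq conn_sym conn_trans by blast
    then have "(u,q) \<in> conn z" using conn_x_z by blast
    then show ?thesis using pq_z conn_sym conn_trans by blast
  qed
qed

lemma conn_z: "conn z = R'"
proof
  show "conn z \<subseteq> R'" by (rule conn_z_sub)
  show "R' \<subseteq> conn z"
  proof
    fix e assume e: "e \<in> R'"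
    obtain u v where uv: "e = (u,v)" by (cases e)
    show "e \<in> conn z"
    proof (cases "(u,v) \<in> conn x")
      case True then show ?thesis using uv conn_x_z by blast
    next
      case False then have "u \<in> S" "v \<in> S" using e uv by auto
      then have "(u,p) \<in> conn z" "(v,p) \<in> conn z" using S_p by auto
      then show ?thesis using uv conn_sym conn_trans by blast
    qed
  qed
qed

lemma z_bond: "z = G \<inter> conn z"
  unfolding conn_z by (simp add: mrg_def)

lemma x_neq_z: "x \<noteq> z"
proof
  assume xz: "x = z"
  have "(p,q) \<in> z \<or> (q,p) \<in> z" using pq pS qS unfolding mrg_def by blast
  then have "(p,q) \<in> conn x \<or> (q,p) \<in> conn x" using xz x by blast
  then have "(p,q) \<in> conn x" using conn_sym by blast
  then have "(a,b) \<in> conn x" using ap bq conn_sym conn_trans by blast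
  then show False using ab_nc by blast
qed

lemma between:
  assumes w: "w = G \<inter> conn w" and xw: "x \<subseteq> w" and wz: "w \<subseteq> z"
  shows "w = x \<or> w = z"
proof (cases "w = x")
  case True then show ?thesis by simp
next
  case False
  then obtain e where e: "e \<in> w" "e \<notin> x" using xw by blast
  obtain c d where cd: "e = (c,d)" by (cases e)
  have eG: "e \<in> G" using e w by blast
  have "e \<notin> conn x" using e eG x by blast
  moreover have "e \<in> R'" using e wz z_sub by blast
  ultimately have cS: "c \<in> S" and dS: "d \<in> S" and cdn: "(c,d) \<notin> conn x" using cd by auto
  have cdw: "(c,d) \<in> conn w" using e cd conn_base by blast
  have cxw: "conn x \<subseteq> conn w" using conn_mono[OF xw] .
  have abw: "(a,b) \<in> conn w"
  proof (cases "(a,c) \<in> conn x")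
    case True
    have "(b,d) \<in> conn x"
    proof (rule ccontr)
      assume "(b,d) \<notin> conn x"
      then have "(a,d) \<in> conn x" using S_cases dS by blast
      then have "(c,d) \<in> conn x" using True conn_sym conn_trans by blast
      then show False using cdn by blast
    qed
    then have "(a,c) \<in> conn w" "(d,b) \<in> conn w" using True cxw conn_sym by blast+
    then show ?thesis using cdw conn_trans by blast
  next
    case False
    then have bc: "(b,c) \<in> conn x" using S_cases cS by blast
    have "(a,d) \<in> conn x"
    proof (rule ccontr)
      assume "(a,d) \<notin> conn x"
      then have "(b,d) \<in> conn x" using S_cases dS by blast
      then have "(c,d) \<in> conn x" using bc conn_sym conn_trans by blast
      then show False using cdn by blast
    qed
    then have "(a,d) \<in> conn w" "(c,b) \<in> conn w" using bc cxw conn_sym by blast+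
    then show ?thesis using cdw conn_sym conn_trans by blast
  qed
  have "R' \<subseteq> conn w"
  proof
    fix f assume f: "f \<in> R'"
    obtain u v where uv: "f = (u,v)" by (cases f)
    show "f \<in> conn w"
    proof (cases "(u,v) \<in> conn x")
      case True then show ?thesis using uv cxw by blast
    next
      case False then have "u \<in> S" "v \<in> S" using f uv by auto
      have Sa: "(s,a) \<in> conn w" if "s \<in> S" for s
      proof (cases "(a,s) \<in> conn x")
        case True then show ?thesis using cxw conn_sym by blast
      next
        case False then have "(b,s) \<in> conn x" using S_cases that by blast
        then have "(s,b) \<in> conn w" using cxw conn_sym by blast
        then show ?thesis using abw conn_sym conn_trans by blast
      qed
      then show ?thesis using uv \<open>u \<in> S\<close> \<open>v \<in> S\<close> conn_sym conn_trans by blast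
    qed
  qed
  then have "z \<subseteq> w" using w unfolding mrg_def by blast
  then show ?thesis using wz by blast
qed

lemma mins_z: "mins n z = mins n x - {max a b}"
proof
  show "mins n z \<subseteq> mins n x - {max a b}"
  proof
    fix v assume v: "v \<in> mins n z"
    have "v \<in> mins n x" using v mins_mono[OF conn_x_z] by blast
    moreover have "v \<noteq> max a b"
    proof
      assume vm: "v = max a b"
      have "min a b \<in> S" "max a b \<in> S" using aS bS by (auto simp: min_def max_def)
      then have "(v, min a b) \<in> conn z" using vm conn_z by blast
      then have "v \<le> min a b" using mins_le[OF v] by blast
      then show False using vm ab by simp
    qed
    ultimately show "v \<in> mins n x - {max a b}" by blast
  qed
next
  show "mins n x - {max a b} \<subseteq> mins n z"
  proof
    fix v assume v: "v \<in> mins n x - {max a b}"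
    show "v \<in> mins n z"
    proof (rule minsI)
      show "v \<in> {1..n+1}" using v mins_range by blast
    next
      fix u assume "(v,u) \<in> conn z"
      then have vu: "(v,u) \<in> R'" using conn_z by blast
      show "v \<le> u"
      proof (cases "(v,u) \<in> conn x")
        case True then show ?thesis using v mins_le by blast
      next
        case False
        then have vS: "v \<in> S" and uS: "u \<in> S" using vu by auto
        have "v = a \<or> v = b"
        proof (cases "(a,v) \<in> conn x")
          case True then show ?thesis using mins_eq a v by blast
        next
          case False then have "(b,v) \<in> conn x" using S_cases vS by blast
          then show ?thesis using mins_eq b v by blast
        qed
        then have vmin: "v = min a b" using v by (auto simp: min_def max_def)
        have "a \<le> u \<or> b \<le> u" using S_cases[OF uS] mins_le a b by blast
        then show ?thesis using vmin by auto
      qed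
    qed
  qed
qed

lemma class_z: "conn z `` {t} = (if t \<in> S then S else conn x `` {t})"
proof (cases "t \<in> S")
  case True
  have "conn z `` {t} = S"
  proof
    show "conn z `` {t} \<subseteq> S" using True S_closed conn_z by blast
    show "S \<subseteq> conn z `` {t}" using True conn_z by blast
  qed
  then show ?thesis using True by simp
next
  case False
  have "conn z `` {t} = conn x `` {t}" using False conn_z by blast
  then show ?thesis using False by simp
qed

lemma a_range: "a \<in> {1..n+1}" and b_range: "b \<in> {1..n+1}" using a b mins_range by blast+

lemma blocks_diff: "blocks n x - blocks n z = {conn x `` {a}, conn x `` {b}}"
proof
  show "blocks n x - blocks n z \<subseteq> {conn x `` {a}, conn x `` {b}}"
  proof
    fix B assume B: "B \<in> blocks n x - blocks n z"
    then obtain t where t: "t \<in> {1..n+1}" "B = conn x `` {t}" unfolding blocks_def by blast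
    have "t \<in> S"
    proof (rule ccontr)
      assume "t \<notin> S"
      then have "B = conn z `` {t}" using t class_z by simp
      then have "B \<in> blocks n z" using t unfolding blocks_def by blast
      then show False using B by blast
    qed
    then have "(a,t) \<in> conn x \<or> (b,t) \<in> conn x" using S_cases by blast
    then show "B \<in> {conn x `` {a}, conn x `` {b}}" using t conn_class_eq by blast
  qed
next
  have nb: "conn x `` {c} \<notin> blocks n z" if c: "c = a \<or> c = b" for c
  proof
    assume "conn x `` {c} \<in> blocks n z"
    then obtain t where t: "conn x `` {c} = conn z `` {t}" unfolding blocks_def by blast
    show False
    proof (cases "t \<in> S")
      case True
      then have eq: "conn x `` {c} = S" using t class_z by simp
      have "a \<in> conn x `` {c}" "b \<in> conn x `` {c}" using eq aS bS by auto
      then have "(c,a) \<in> conn x" "(c,b) \<in> conn x" by auto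
      then have "(a,b) \<in> conn x" using conn_sym conn_trans by blast
      then show False using ab_nc by blast
    next
      case False
      then have "conn x `` {c} = conn x `` {t}" using t class_z by simp
      then have "c \<in> conn x `` {t}" by (metis Image_singleton_iff conn_refl)
      then have "(t,c) \<in> conn x" by simp
      moreover have "c \<in> S" using c aS bS by blast
      ultimately show False using S_closed' False by blast
    qed
  qed
  have "conn x `` {a} \<in> blocks n x" "conn x `` {b} \<in> blocks n x"
    using a_range b_range unfolding blocks_def by auto
  then show "{conn x `` {a}, conn x `` {b}} \<subseteq> blocks n x - blocks n z" using nb by blast
qed

lemma Min_class: "c \<in> mins n x \<Longrightarrow> Min (conn x `` {c}) = c"
proof -
  assume c: "c \<in> mins n x"
  have fin: "finite (conn x `` {c})" using class_finite[OF G xG] .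
  show ?thesis
  proof (rule Min_eqI[OF fin])
    show "c \<in> conn x `` {c}" by simp
    fix y assume "y \<in> conn x `` {c}"
    then show "c \<le> y" using mins_le[OF c] by simp
  qed
qed

lemma label_z: "maxmin_label n x z = max a b - 1"
  unfolding maxmin_label_def blocks_diff using Min_class[OF a] Min_class[OF b]
  by (simp add: max_def)

end



locale K_setup =
  fixes n :: nat and G x y :: "(nat \<times> nat) set"
  assumes G: "is_graph n G" and pl: "perfectly_labeled G"
    and xNC: "x \<in> NC n G" and yNC: "y \<in> NC n G" and xy: "x \<subseteq> y" and xney: "x \<noteq> y"
begin

lemma xb: "x = G \<inter> conn x" and xN: "NCR (conn x)" using xNC NC_iff[OF G] by auto
lemma yb: "y = G \<inter> conn y" and yN: "NCR (conn y)" using yNC NC_iff[OF G] by auto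
lemma xG: "x \<subseteq> G" using xb by blast
lemma yG: "y \<subseteq> G" using yb by blast
lemma cxy: "conn x \<subseteq> conn y" using conn_mono[OF xy] .

definition "D = mins n x - mins n y"
definition "m = Min D"
definition "r = rep y m"

lemma D_fin: "finite D" unfolding D_def mins_def by auto

lemma D_ne: "D \<noteq> {}"
proof -
  obtain e where e: "e \<in> y" "e \<notin> x" using xy xney by blast
  obtain i j where ij: "e = (i,j)" by (cases e)
  have eG: "e \<in> G" using e yG by blast
  have ir: "i \<in> {1..n+1}" and jr: "j \<in> {1..n+1}" using eG ij G unfolding is_graph_def by auto
  have nij: "(i,j) \<notin> conn x" using e ij eG xb by blast
  have ijy: "(i,j) \<in> conn y" using e ij conn_base by blast
  obtain a' where a': "a' \<in> mins n x" "(i,a') \<in> conn x" using rep_props[OF G xG ir] by blast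
  obtain b' where b': "b' \<in> mins n x" "(j,b') \<in> conn x" using rep_props[OF G xG jr] by blast
  have "(a',b') \<in> conn y" using a' b' ijy cxy conn_sym conn_trans by blast
  moreover have "a' \<noteq> b'"
  proof
    assume "a' = b'"
    then have "(i,j) \<in> conn x" using a' b' conn_sym conn_trans by blast
    then show False using nij by blast
  qed
  ultimately have "a' \<notin> mins n y \<or> b' \<notin> mins n y" using mins_eq by blast
  then show ?thesis unfolding D_def using a' b' by blast
qed

lemma m_D: "m \<in> D" unfolding m_def using Min_in[OF D_fin D_ne] .
lemma m_min: "t \<in> D \<Longrightarrow> m \<le> t" unfolding m_def using Min_le[OF D_fin] by blast
lemma m_x: "m \<in> mins n x" and m_y: "m \<notin> mins n y" using m_D unfolding D_def by auto
lemma m_range: "m \<in> {1..n+1}" using m_x mins_range by blast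

lemma r_props: "r \<in> mins n y" "(m,r) \<in> conn y" "r \<le> m"
  using rep_props[OF G yG m_range] unfolding r_def by auto

lemma r_x: "r \<in> mins n x" using r_props(1) mins_mono[OF cxy] by blast
lemma r_lt: "r < m" using r_props m_y by (metis order_le_imp_less_or_eq)
lemma m_ge2: "2 \<le> m" using r_lt r_x mins_range by fastforce

lemma U: "u \<in> mins n x \<Longrightarrow> (u,m) \<in> conn y \<Longrightarrow> u < m \<Longrightarrow> u = r"
proof -
  assume u: "u \<in> mins n x" "(u,m) \<in> conn y" "u < m"
  have "u \<notin> D" using m_min u(3) by fastforce
  then have "u \<in> mins n y" using u(1) unfolding D_def by blast
  moreover have "(u,r) \<in> conn y" using u(2) r_props(2) conn_trans by blast
  ultimately show "u = r" using mins_eq r_props(1) by blast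
qed

lemma adj: "\<exists>p. (p,m) \<in> G \<and> (r,p) \<in> conn x"
proof -
  obtain p where p: "(p,m) \<in> y"
    using lower_nb[OF G pl yb conn_sym[OF r_props(2)] r_lt] by blast
  have pG: "(p,m) \<in> G" using p yG by blast
  then have pr: "p \<in> {1..n+1}" and pm: "p < m" using G unfolding is_graph_def by auto
  obtain u where u: "u \<in> mins n x" "(p,u) \<in> conn x" "u \<le> p" using rep_props[OF G xG pr] by blast
  have "(u,m) \<in> conn y"
  proof -
    have "(u,p) \<in> conn y" using u(2) cxy conn_sym by blast
    moreover have "(p,m) \<in> conn y" using p conn_base by blast
    ultimately show ?thesis using conn_trans by blast
  qed
  then have "u = r" using U u pm by fastforce
  then show ?thesis using pG u(2) conn_sym by blast
qed

definition "p0 = (SOME p. (p,m) \<in> G \<and> (r,p) \<in> conn x)"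
lemma p0: "(p0,m) \<in> G" "(r,p0) \<in> conn x"
  using someI_ex[OF adj] unfolding p0_def by auto

definition "z = mrg G x r m"

sublocale M: mrg_setup n G x r m p0 m
  by unfold_locales (use G xb r_x m_x r_lt p0 in auto)

lemma S_y: "u \<in> Sab x r m \<Longrightarrow> (u,m) \<in> conn y"
proof -
  assume "u \<in> Sab x r m"
  then have "(r,u) \<in> conn x \<or> (m,u) \<in> conn x" by (rule M.S_cases)
  then show ?thesis
  proof
    assume "(r,u) \<in> conn x"
    then have "(u,r) \<in> conn y" using cxy conn_sym by blast
    then show ?thesis using r_props(2) conn_sym conn_trans by blast
  next
    assume "(m,u) \<in> conn x"
    then show ?thesis using cxy conn_sym by blast
  qed
qed

lemma conn_z_y: "conn z \<subseteq> conn y"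
proof
  fix e assume e: "e \<in> conn z"
  obtain u v where uv: "e = (u,v)" by (cases e)
  have "(u,v) \<in> conn x \<or> (u \<in> Sab x r m \<and> v \<in> Sab x r m)" using e uv M.conn_z unfolding z_def by auto
  then show "e \<in> conn y"
  proof
    assume "(u,v) \<in> conn x" then show ?thesis using uv cxy by blast
  next
    assume "u \<in> Sab x r m \<and> v \<in> Sab x r m"
    then show ?thesis using uv S_y conn_sym conn_trans by blast
  qed
qed

lemma z_y: "z \<subseteq> y"
  using M.z_bond conn_z_y yb unfolding z_def by blast

lemma F: "(m,t) \<in> conn y \<Longrightarrow> t \<notin> Sab x r m \<Longrightarrow> m < t"
proof -
  assume mt: "(m,t) \<in> conn y" and tS: "t \<notin> Sab x r m"
  have "t \<noteq> m" using tS M.bS by blast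
  then have tr: "t \<in> {1..n+1}" using conn_range[OF G yG mt] by blast
  obtain u where u: "u \<in> mins n x" "(t,u) \<in> conn x" "u \<le> t" using rep_props[OF G xG tr] by blast
  have um: "(u,m) \<in> conn y" using u(2) mt cxy conn_sym conn_trans by blast
  have "u \<noteq> r"
  proof
    assume "u = r"
    then have "(r,t) \<in> conn x" using u(2) conn_sym by blast
    then show False using tS unfolding Sab_def by blast
  qed
  then have "\<not> u < m" using U u(1) um by blast
  moreover have "u \<noteq> m"
  proof
    assume "u = m"
    then have "(m,t) \<in> conn x" using u(2) conn_sym by blast
    then show False using tS unfolding Sab_def by blast
  qed
  ultimately show ?thesis using u(3) by simp
qed

lemma ncx: "\<not> (a < b \<and> b < c \<and> c < d \<and> (a,c) \<in> conn x \<and> (b,d) \<in> conn x \<and> (a,b) \<notin> conn x)" for a b c d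
  using xN unfolding NCR_def by blast

lemma z_NCR: "NCR (conn z)"
  unfolding NCR_def
proof
  let ?S = "Sab x r m"
  assume "\<exists>a b c d. a < b \<and> b < c \<and> c < d \<and> (a,c) \<in> conn z \<and> (b,d) \<in> conn z \<and> (a,b) \<notin> conn z"
  then obtain a b c d where w: "a < b" "b < c" "c < d" "(a,c) \<in> conn z" "(b,d) \<in> conn z" "(a,b) \<notin> conn z"
    by blast
  have cz: "conn z = conn x \<union> ?S \<times> ?S" using M.conn_z unfolding z_def .
  have aby: "(a,b) \<in> conn y"
  proof (rule ccontr)
    assume "(a,b) \<notin> conn y"
    then show False using yN w(1-5) conn_z_y unfolding NCR_def by blast
  qed
  have abx: "(a,b) \<notin> conn x" "\<not> (a \<in> ?S \<and> b \<in> ?S)" using w(6) cz by auto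
  show False
  proof (cases "(a,c) \<in> conn x")
    case False
    then have aS: "a \<in> ?S" and cS: "c \<in> ?S" using w(4) cz by auto
    then have bS: "b \<notin> ?S" using abx by blast
    then have bdx: "(b,d) \<in> conn x" using w(5) cz by auto
    have "(m,b) \<in> conn y" using S_y[OF aS] aby conn_sym conn_trans by blast
    then have mb: "m < b" using F bS by blast
    have "(r,c) \<in> conn x \<or> (m,c) \<in> conn x" using M.S_cases[OF cS] .
    then show False
    proof
      assume rc: "(r,c) \<in> conn x"
      have "(r,b) \<notin> conn x" using bS unfolding Sab_def by blast
      then show False using ncx[of r b c d] rc bdx mb r_lt w by linarith
    next
      assume mc: "(m,c) \<in> conn x"
      have "(m,b) \<notin> conn x" using bS unfolding Sab_def by blast
      then show False using ncx[of m b c d] mc bdx mb w by linarith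
    qed
  next
    case True
    then have bdx: "(b,d) \<notin> conn x" using ncx[of a b c d] w abx by blast
    then have bS: "b \<in> ?S" and dS: "d \<in> ?S" using w(5) cz by auto
    then have aS: "a \<notin> ?S" using abx by blast
    have "(m,a) \<in> conn y" using S_y[OF bS] aby conn_sym conn_trans by blast
    then have ma: "m < a" using F aS by blast
    have "(r,b) \<in> conn x \<or> (m,b) \<in> conn x" using M.S_cases[OF bS] .
    then show False
    proof
      assume rb: "(r,b) \<in> conn x"
      have "(r,a) \<notin> conn x" using aS unfolding Sab_def by blast
      then show False using ncx[of r a b c] rb True ma r_lt w by linarith
    next
      assume mb: "(m,b) \<in> conn x"
      have "(m,a) \<notin> conn x" using aS unfolding Sab_def by blast
      then show False using ncx[of m a b c] mb True ma w by linarith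
    qed
  qed
qed

lemma z_NC: "z \<in> NC n G"
  using NC_iff[OF G] M.z_bond z_NCR unfolding z_def by blast

lemma z_cover: "covers (NC n G) x z"
  unfolding covers_def
proof (intro conjI)
  show "x \<in> NC n G" by (rule xNC)
  show "z \<in> NC n G" by (rule z_NC)
  show "x < z" using M.x_sub_z M.x_neq_z unfolding z_def by blast
  show "\<not> (\<exists>w\<in>NC n G. x < w \<and> w < z)"
  proof
    assume "\<exists>w\<in>NC n G. x < w \<and> w < z"
    then obtain w where w: "w \<in> NC n G" "x < w" "w < z" by blast
    have "w = G \<inter> conn w" using w(1) NC_iff[OF G] by blast
    then have "w = x \<or> w = mrg G x r m" using M.between w(2,3) unfolding z_def by blast
    then show False using w(2,3) unfolding z_def by blast
  qed
qed

lemma z_mins: "mins n z = mins n x - {m}"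
  using M.mins_z r_lt unfolding z_def by (simp add: max_def)

lemma z_label: "maxmin_label n x z = m - 1"
  using M.label_z r_lt unfolding z_def by (simp add: max_def)

end



lemma mci_single: "max_chain_interval P x y [a] \<longleftrightarrow> a = x \<and> a = y \<and> a \<in> P"
  unfolding max_chain_interval_def by auto

lemma mci_cons: "max_chain_interval P x y (a # b # rest) \<longleftrightarrow>
   a = x \<and> covers P a b \<and> max_chain_interval P b y (b # rest)"
  unfolding max_chain_interval_def covers_def by auto

lemma cl_single[simp]: "chain_labels lab [a] = []"
  unfolding chain_labels_def by simp

lemma cl_cons[simp]: "chain_labels lab (a # b # rest) = lab a b # chain_labels lab (b # rest)"
  unfolding chain_labels_def by simp

lemma cl_length: "length (chain_labels lab c) = length c - 1"
  unfolding chain_labels_def by simp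

locale PLG =
  fixes n :: nat and G :: "(nat \<times> nat) set"
  assumes G: "is_graph n G" and pl: "perfectly_labeled G"
begin

abbreviation "P \<equiv> NC n G"
abbreviation "lab \<equiv> maxmin_label n"
abbreviation "LL c \<equiv> chain_labels (maxmin_label n) c"

lemma cov_char:
  assumes c: "covers P x w"
  shows "\<exists>m. m \<in> mins n x \<and> m \<notin> mins n w \<and> 2 \<le> m \<and> mins n w = mins n x - {m} \<and> lab x w = m - 1"
proof -
  have xw: "x \<in> P" "w \<in> P" "x < w" using c unfolding covers_def by auto
  interpret K: K_setup n G x w
    by unfold_locales (use G pl xw in auto)
  have "K.z = w"
  proof (rule ccontr)
    assume "K.z \<noteq> w"
    then have "K.z < w" using K.z_y by blast
    moreover have "x < K.z" using K.z_cover unfolding covers_def by blast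
    ultimately show False using c K.z_NC unfolding covers_def by blast
  qed
  then show ?thesis using K.m_x K.m_y K.m_ge2 K.z_mins K.z_label by metis
qed

lemma cov_unique:
  assumes xP: "x \<in> P" and yP: "y \<in> P" and xy: "x \<subseteq> y" "x \<noteq> y"
    and c: "covers P x w" and wy: "w \<subseteq> y" and l: "lab x w = K_setup.m n x y - 1"
  shows "w = K_setup.z n G x y"
proof -
  have xw: "x \<in> P" "w \<in> P" "x < w" using c unfolding covers_def by auto
  interpret Kw: K_setup n G x w
    by unfold_locales (use G pl xw in auto)
  interpret Ky: K_setup n G x y
    by unfold_locales (use G pl xP yP xy in auto)
  have wz: "Kw.z = w"
  proof (rule ccontr)
    assume "Kw.z \<noteq> w"
    then have "Kw.z < w" using Kw.z_y by blast
    moreover have "x < Kw.z" using Kw.z_cover unfolding covers_def by blast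
    ultimately show False using c Kw.z_NC unfolding covers_def by blast
  qed
  have "Kw.m - 1 = Ky.m - 1" using l wz Kw.z_label by simp
  then have mm: "Kw.m = Ky.m" using Kw.m_ge2 Ky.m_ge2 by simp
  have "conn w \<subseteq> conn y" using conn_mono[OF wy] .
  then have "(Kw.m, Kw.r) \<in> conn y" using Kw.r_props(2) by blast
  then have "(Kw.r, Ky.m) \<in> conn y" using mm conn_sym by simp
  then have "Kw.r = Ky.r" using Ky.U[OF Kw.r_x] Kw.r_lt mm by simp
  then show ?thesis using wz mm unfolding Kw.z_def Ky.z_def by simp
qed

lemma CL:
  "max_chain_interval P x y c \<Longrightarrow> x \<subseteq> y \<and> mins n y \<subseteq> mins n x \<and> distinct (LL c) \<and>
     set (LL c) = (\<lambda>t. t - 1) ` (mins n x - mins n y) \<and> (2 \<le> length c \<longrightarrow> x \<noteq> y)"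
proof (induction c arbitrary: x rule: induct_list012)
  case 1 then show ?case unfolding max_chain_interval_def by simp
next
  case (2 a) then show ?case by (auto simp: mci_single)
next
  case (3 a b rest)
  have ax: "a = x" and cab: "covers P a b" and tl: "max_chain_interval P b y (b # rest)"
    using "3.prems" by (auto simp: mci_cons)
  note IH = "3.IH"(2)[OF tl]
  obtain m where m: "m \<in> mins n a" "m \<notin> mins n b" "2 \<le> m" "mins n b = mins n a - {m}" "lab a b = m - 1"
    using cov_char[OF cab] by blast
  have ab: "a \<subseteq> b" "a \<noteq> b" using cab unfolding covers_def by auto
  have xy: "x \<subseteq> y" "x \<noteq> y" using IH ab ax by auto
  have my: "mins n y \<subseteq> mins n x" using IH m(4) ax by auto
  have mny: "m \<notin> mins n y" using IH m(2) by blast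
  have nin: "m - 1 \<notin> set (LL (b # rest))"
  proof
    assume "m - 1 \<in> set (LL (b # rest))"
    then obtain t where t: "t \<in> mins n b" "t \<notin> mins n y" "m - 1 = t - 1" using IH by auto
    have "1 \<le> t" using t(1) mins_range by fastforce
    then have "t = m" using t(3) m(3) by simp
    then show False using t(1) m(2) by simp
  qed
  have "set (LL (a # b # rest)) = insert (m - 1) ((\<lambda>t. t - 1) ` (mins n b - mins n y))"
    using IH m(5) by simp
  also have "... = (\<lambda>t. t - 1) ` (mins n x - mins n y)"
    using m(1) m(4) mny ax by auto
  finally show ?case using xy my nin IH m(5) by simp
qed

lemma mci_mono: "max_chain_interval P x y c \<Longrightarrow> x \<subseteq> y" using CL by blast

lemma ex_inc:
  assumes "x \<in> P" "y \<in> P" "x \<subseteq> y"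
  shows "\<exists>c. max_chain_interval P x y c \<and> sorted_wrt (<) (LL c)"
  using assms
proof (induction "card (mins n x - mins n y)" arbitrary: x rule: less_induct)
  case less
  show ?case
  proof (cases "x = y")
    case True
    then have "max_chain_interval P x y [x]" using less.prems by (auto simp: mci_single)
    then show ?thesis by fastforce
  next
    case False
    interpret K: K_setup n G x y
      by unfold_locales (use G pl less.prems False in auto)
    have eq: "mins n K.z - mins n y = K.D - {K.m}" using K.z_mins unfolding K.D_def by auto
    have lt: "card (mins n K.z - mins n y) < card (mins n x - mins n y)"
      unfolding eq using card_Diff1_less[OF K.D_fin K.m_D] unfolding K.D_def .
    obtain c where c: "max_chain_interval P K.z y c" "sorted_wrt (<) (LL c)"
      using less.hyps[OF lt K.z_NC less.prems(2) K.z_y] by blast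
    obtain rest where cr: "c = K.z # rest" using c(1) unfolding max_chain_interval_def
      by (metis list.collapse)
    have mc: "max_chain_interval P x y (x # K.z # rest)"
      using K.z_cover c(1) cr by (auto simp: mci_cons)
    have setc: "set (LL c) = (\<lambda>t. t - 1) ` (mins n K.z - mins n y)" using CL[OF c(1)] by blast
    have "\<forall>l\<in>set (LL c). K.m - 1 < l"
    proof
      fix l assume "l \<in> set (LL c)"
      then obtain t where t: "t \<in> K.D" "t \<noteq> K.m" "l = t - 1" using setc K.z_mins unfolding K.D_def by auto
      have "K.m < t" using K.m_min[OF t(1)] t(2) by simp
      then show "K.m - 1 < l" using t(3) K.m_ge2 by simp
    qed
    then have "sorted_wrt (<) (LL (x # K.z # rest))" using c(2) cr K.z_label by simp
    then show ?thesis using mc by blast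
  qed
qed

lemma first_label:
  assumes mc: "max_chain_interval P x y (x # b # rest)" and s: "sorted_wrt (<) (LL (x # b # rest))"
    and xy: "x \<noteq> y"
  shows "lab x b = K_setup.m n x y - 1"
proof -
  have xP: "x \<in> P" and yP: "y \<in> P" using mc last_in_set unfolding max_chain_interval_def by fastforce+
  have sub: "x \<subseteq> y" using mci_mono[OF mc] .
  interpret K: K_setup n G x y
    by unfold_locales (use G pl xP yP sub xy in auto)
  have setL: "set (LL (x # b # rest)) = (\<lambda>t. t - 1) ` K.D" using CL[OF mc] unfolding K.D_def by blast
  have "lab x b \<in> set (LL (x # b # rest))" by simp
  then obtain t where t: "t \<in> K.D" "lab x b = t - 1" using setL by auto
  have mt: "K.m \<le> t" using K.m_min t(1) by blast
  have "K.m - 1 \<in> set (LL (x # b # rest))" using setL K.m_D by blast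
  then have "K.m - 1 = lab x b \<or> K.m - 1 \<in> set (LL (b # rest))" by simp
  then show ?thesis
  proof
    assume "K.m - 1 \<in> set (LL (b # rest))"
    then have "lab x b < K.m - 1" using s by simp
    then show ?thesis using t mt by simp
  qed simp
qed

lemma uniq_inc:
  "max_chain_interval P x y c1 \<Longrightarrow> max_chain_interval P x y c2 \<Longrightarrow>
   sorted_wrt (<) (LL c1) \<Longrightarrow> sorted_wrt (<) (LL c2) \<Longrightarrow> c1 = c2"
proof (induction c1 arbitrary: x c2 rule: induct_list012)
  case 1 then show ?case unfolding max_chain_interval_def by simp
next
  case (2 a)
  then have xy: "x = y" "a = x" by (auto simp: mci_single)
  show ?case
  proof (cases c2 rule: remdups_adj.cases)
    case 1 then show ?thesis using "2.prems" unfolding max_chain_interval_def by simp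
  next
    case (2 a') then show ?thesis using "2.prems" xy by (auto simp: mci_single)
  next
    case (3 a' b' rest')
    then have "x \<noteq> y" using CL[OF "2.prems"(2)] by simp
    then show ?thesis using xy by simp
  qed
next
  case (3 a b rest)
  have ax: "a = x" and cab: "covers P x b" and tl: "max_chain_interval P b y (b # rest)"
    using "3.prems"(1) by (auto simp: mci_cons)
  have xy: "x \<noteq> y" using CL[OF "3.prems"(1)] by simp
  have xP: "x \<in> P" and yP: "y \<in> P" and sub: "x \<subseteq> y"
    using "3.prems"(1) mci_mono[OF "3.prems"(1)] last_in_set unfolding max_chain_interval_def by fastforce+
  obtain b' rest' where c2: "c2 = x # b' # rest'"
  proof (cases c2 rule: remdups_adj.cases)
    case 1 then show ?thesis using "3.prems" unfolding max_chain_interval_def by simp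
  next
    case (2 a') then show ?thesis using "3.prems"(2) xy by (auto simp: mci_single)
  next
    case (3 a' b' rest')
    then show ?thesis using that "3.prems"(2) by (auto simp: mci_cons)
  qed
  have cb': "covers P x b'" and tl': "max_chain_interval P b' y (b' # rest')"
    using "3.prems"(2) c2 by (auto simp: mci_cons)
  have "b = K_setup.z n G x y"
    by (rule cov_unique[OF xP yP sub xy cab mci_mono[OF tl]])
       (rule first_label[OF "3.prems"(1)[unfolded ax] "3.prems"(3)[unfolded ax] xy])
  moreover have "b' = K_setup.z n G x y"
    by (rule cov_unique[OF xP yP sub xy cb' mci_mono[OF tl']])
       (rule first_label[OF "3.prems"(2)[unfolded c2] "3.prems"(4)[unfolded c2] xy])
  ultimately have bb: "b = b'" by simp
  have "b # rest = b' # rest'"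
    using "3.IH"(2)[OF tl] tl' bb "3.prems"(3,4) c2 by simp
  then show ?case using ax c2 by simp
qed

end

lemma lex_sorted:
  fixes xs ys :: "nat list"
  shows "sorted_wrt (<) xs \<Longrightarrow> distinct ys \<Longrightarrow> set xs = set ys \<Longrightarrow> xs \<noteq> ys \<Longrightarrow> ord_class.lexordp xs ys"
proof (induction xs arbitrary: ys)
  case Nil then show ?case by simp
next
  case (Cons a xs)
  obtain b ys' where ys: "ys = b # ys'" using Cons.prems(3) by (cases ys) auto
  have ab: "a \<le> b"
  proof -
    have "b \<in> set (a # xs)" using Cons.prems(3) ys by simp
    then show ?thesis using Cons.prems(1) by auto
  qed
  show ?case
  proof (cases "a = b")
    case False then show ?thesis using ab ys by simp
  next
    case True
    have "a \<notin> set xs" using Cons.prems(1) by auto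
    moreover have "b \<notin> set ys'" using Cons.prems(2) ys by simp
    ultimately have "set xs = set ys'" using Cons.prems(3) ys True by auto
    moreover have "xs \<noteq> ys'" using Cons.prems(4) ys True by simp
    ultimately have "ord_class.lexordp xs ys'" using Cons.IH Cons.prems(1,2) ys by simp
    then show ?thesis using ys True by simp
  qed
qed



lemma conn_empty: "conn {} = Id" unfolding conn_def by simp

lemma mins_empty: "mins n {} = {1..n+1}" unfolding mins_def conn_empty by auto

lemma empty_bond: "is_graph n G \<Longrightarrow> {} = G \<inter> conn {}"
  unfolding conn_empty is_graph_def by auto

lemma NCR_single: "NCR (Id \<union> T \<times> T)"
  unfolding NCR_def by auto

lemma empty_NC: "is_graph n G \<Longrightarrow> {} \<in> NC n G"
  using NC_iff empty_bond NCR_single[of "{}"] conn_empty by (metis Sigma_empty1 sup_bot_right)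

lemma G_NC:
  assumes G: "is_graph n G" and c: "graph_connected n G"
  shows "G \<in> NC n G"
proof -
  have "G \<subseteq> conn G" using conn_base by auto
  then have b: "G = G \<inter> conn G" by blast
  have "NCR (conn G)" unfolding NCR_def
  proof
    assume "\<exists>a b c d. a < b \<and> b < c \<and> c < d \<and> (a, c) \<in> conn G \<and> (b, d) \<in> conn G \<and> (a, b) \<notin> conn G"
    then obtain a b c d where w: "a < b" "b < c" "c < d" "(a, c) \<in> conn G" "(b, d) \<in> conn G" "(a, b) \<notin> conn G"
      by blast
    have "a \<in> {1..n+1}" using conn_range[OF G _ w(4)] w by auto
    moreover have "b \<in> {1..n+1}" using conn_range[OF G _ w(5)] w by auto
    ultimately have "(a,b) \<in> conn G" using c unfolding graph_connected_def by blast
    then show False using w(6) by blast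
  qed
  then show ?thesis using NC_iff[OF G] b by blast
qed

lemma mins_G:
  assumes G: "is_graph n G" and c: "graph_connected n G"
  shows "mins n G = {1}"
proof
  show "mins n G \<subseteq> {1}"
  proof
    fix v assume v: "v \<in> mins n G"
    then have "v \<in> {1..n+1}" by (rule mins_range)
    then have "(v,1) \<in> conn G" using c unfolding graph_connected_def by auto
    then have "v \<le> 1" using mins_le[OF v] by blast
    then show "v \<in> {1}" using \<open>v \<in> {1..n+1}\<close> by auto
  qed
next
  show "{1} \<subseteq> mins n G"
  proof -
    have "1 \<in> mins n G"
    proof (rule minsI)
      show "1 \<in> {1..n+1}" by simp
      fix u assume "(1,u) \<in> conn G"
      then show "1 \<le> u" using conn_range[OF G _ \<open>(1,u) \<in> conn G\<close>] by (cases "u = 1") auto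
    qed
    then show ?thesis by blast
  qed
qed

context PLG
begin

lemma EL: "EL_labeling P lab"
  unfolding EL_labeling_def
proof (intro ballI impI conjI)
  fix x y assume xP: "x \<in> P" and yP: "y \<in> P" and xy: "x \<le> y"
  show "\<exists>!c. max_chain_interval P x y c \<and> sorted_wrt (<) (LL c)"
    using ex_inc[OF xP yP] xy uniq_inc by blast
  show "\<forall>c c'. max_chain_interval P x y c \<and> sorted_wrt (<) (LL c) \<and>
        max_chain_interval P x y c' \<and> c' \<noteq> c \<longrightarrow> ord_class.lexordp (LL c) (LL c')"
  proof (intro allI impI)
    fix c c'
    assume a: "max_chain_interval P x y c \<and> sorted_wrt (<) (LL c) \<and>
        max_chain_interval P x y c' \<and> c' \<noteq> c"
    have s: "set (LL c) = set (LL c')" using CL a by blast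
    have d: "distinct (LL c')" using CL a by blast
    have ne: "LL c \<noteq> LL c'"
    proof
      assume "LL c = LL c'"
      then have "c = c'" using uniq_inc a by metis
      then show False using a by simp
    qed
    show "ord_class.lexordp (LL c) (LL c')" using lex_sorted a s d ne by blast
  qed
qed

lemma Sn:
  assumes c: "graph_connected n G"
  shows "Sn_EL_labeling n P lab"
  unfolding Sn_EL_labeling_def
proof (intro conjI allI impI)
  show "EL_labeling P lab" by (rule EL)
  fix c assume mc: "maximal_chain P c"
  have cne: "c \<noteq> []" and cP: "set c \<subseteq> P" using mc unfolding maximal_chain_def by auto
  have hP: "hd c \<in> P" using cne cP hd_in_set by blast
  have lP: "last c \<in> P" using cne cP last_in_set by blast
  have h: "hd c = {}"
  proof (rule ccontr)
    assume "hd c \<noteq> {}"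
    then have "{} < hd c" by blast
    then show False using mc empty_NC[OF G] unfolding maximal_chain_def by blast
  qed
  have l: "last c = G"
  proof (rule ccontr)
    assume ne: "last c \<noteq> G"
    have "last c \<subseteq> G" using lP NC_iff[OF G] by blast
    then have "last c < G" using ne by blast
    then show False using mc G_NC[OF G c] unfolding maximal_chain_def by blast
  qed
  have mci: "max_chain_interval P {} G c"
    using mc h l unfolding maximal_chain_def max_chain_interval_def by auto
  have setL: "set (LL c) = (\<lambda>t. t - 1) ` ({1..n+1} - {1})"
    using CL[OF mci] mins_empty mins_G[OF G c] by simp
  also have "... = {1..n}"
  proof
    show "(\<lambda>t. t - 1) ` ({1..n+1} - {1}) \<subseteq> {1..n}" by auto
    show "{1..n} \<subseteq> (\<lambda>t. t - 1) ` ({1..n+1} - {1})"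
    proof
      fix s assume "s \<in> {1..n}"
      then have "s + 1 \<in> {1..n+1} - {1}" "s = (s + 1) - 1" by auto
      then show "s \<in> (\<lambda>t. t - 1) ` ({1..n+1} - {1})" by blast
    qed
  qed
  finally have setL': "set (LL c) = {1..n}" .
  have dL: "distinct (LL c)" using CL[OF mci] by blast
  have "length (LL c) = n" using distinct_card[OF dL] setL' by simp
  then show "length c = n + 1" using cl_length[of "maxmin_label n" c] cne
    by (cases c) auto
  show "distinct (LL c)" by (rule dL)
  show "set (LL c) = {1..n}" by (rule setL')
qed

end



lemma mci_le:
  fixes c :: "'a::order list"
  shows "max_chain_interval P x y c \<Longrightarrow> v \<in> set c \<Longrightarrow> v \<le> y"
proof (induction c arbitrary: x v rule: induct_list012)
  case 1 then show ?case by (simp add: max_chain_interval_def)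
next
  case (2 a) then show ?case by (auto simp: mci_single)
next
  case (3 a b rest)
  have cab: "covers P a b" and tl: "max_chain_interval P b y (b # rest)"
    using "3.prems"(1) by (auto simp: mci_cons)
  have "b \<le> y" using "3.IH"(2)[OF tl] by simp
  show ?case
  proof (cases "v = a")
    case True
    have "a < b" using cab unfolding covers_def by blast
    then show ?thesis using True \<open>b \<le> y\<close> by simp
  next
    case False
    then have "v \<in> set (b # rest)" using "3.prems"(2) by simp
    then show ?thesis using "3.IH"(2)[OF tl] by blast
  qed
qed

lemma pair2:
  fixes G :: "(nat \<times> nat) set"
  assumes Gi: "\<And>a b. (a,b) \<in> G \<Longrightarrow> a < b" and ik: "(i,k) \<in> G" and lt: "i < k"
  shows "G \<inter> (Id \<union> {i,k} \<times> {i,k}) = {(i,k)}"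
proof (rule set_eqI)
  fix e :: "nat \<times> nat"
  obtain a b where e: "e = (a,b)" by (cases e)
  show "e \<in> G \<inter> (Id \<union> {i,k} \<times> {i,k}) \<longleftrightarrow> e \<in> {(i,k)}"
  proof
    assume a: "e \<in> G \<inter> (Id \<union> {i,k} \<times> {i,k})"
    then have "a < b" using Gi e by blast
    then show "e \<in> {(i,k)}" using a e lt by auto
  qed (use ik in auto)
qed

lemma pair3:
  fixes G :: "(nat \<times> nat) set"
  assumes Gi: "\<And>a b. (a,b) \<in> G \<Longrightarrow> a < b" and ik: "(i,k) \<in> G" and jk: "(j,k) \<in> G"
    and nij: "(i,j) \<notin> G" and lt: "i < j" "j < k"
  shows "G \<inter> (Id \<union> {i,j,k} \<times> {i,j,k}) = {(i,k),(j,k)}"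
proof (rule set_eqI)
  fix e :: "nat \<times> nat"
  obtain a b where e: "e = (a,b)" by (cases e)
  show "e \<in> G \<inter> (Id \<union> {i,j,k} \<times> {i,j,k}) \<longleftrightarrow> e \<in> {(i,k),(j,k)}"
  proof
    assume a: "e \<in> G \<inter> (Id \<union> {i,j,k} \<times> {i,j,k})"
    then have "a < b" using Gi e by blast
    then show "e \<in> {(i,k),(j,k)}" using a e lt nij by auto
  qed (use ik jk in auto)
qed

lemma notPL_notEL:
  assumes G: "is_graph n G" and ik: "(i,k) \<in> G" and jk: "(j,k) \<in> G"
    and ij: "i < j" and jk': "j < k" and nij: "(i,j) \<notin> G"
  shows "\<not> EL_labeling (NC n G) (maxmin_label n)"
proof
  assume EL: "EL_labeling (NC n G) (maxmin_label n)"
  have Gi: "\<And>a b. (a,b) \<in> G \<Longrightarrow> a < b \<and> a \<in> {1..n+1} \<and> b \<in> {1..n+1}"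
    using G unfolding is_graph_def by fastforce
  have ir: "i \<in> {1..n+1}" and kr: "k \<in> {1..n+1}" using Gi ik by auto
  have jr: "j \<in> {1..n+1}" using Gi jk by auto
  let ?T = "{i,j,k}"
  interpret M1: mrg_setup n G "{}" i k i k
    by unfold_locales (use G empty_bond[OF G] mins_empty ir kr ij jk' ik in auto)
  define z1 where "z1 = mrg G {} i k"
  have S1: "Sab {} i k = {i,k}" unfolding Sab_def conn_empty by auto
  have cz1: "conn z1 = Id \<union> {i,k} \<times> {i,k}" using M1.conn_z S1 conn_empty unfolding z1_def by simp
  have z1e: "z1 = {(i,k)}"
  proof -
    have "z1 = G \<inter> (Id \<union> {i,k} \<times> {i,k})" unfolding z1_def mrg_def S1 conn_empty by simp
    also have "... = {(i,k)}" using pair2[of G i k] ik Gi ij jk' by simp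
    finally show ?thesis .
  qed
  have l1: "maxmin_label n {} z1 = k - 1" using M1.label_z ij jk' unfolding z1_def by simp
  have mz1: "mins n z1 = {1..n+1} - {k}" using M1.mins_z mins_empty ij jk' unfolding z1_def by simp
  have z1NC: "z1 \<in> NC n G" using NC_iff[OF G] M1.z_bond NCR_single cz1 unfolding z1_def by metis
  interpret M3: mrg_setup n G "{}" j k j k
    by unfold_locales (use G empty_bond[OF G] mins_empty jr kr ij jk' jk in auto)
  define z2 where "z2 = mrg G {} j k"
  have S3: "Sab {} j k = {j,k}" unfolding Sab_def conn_empty by auto
  have cz2: "conn z2 = Id \<union> {j,k} \<times> {j,k}" using M3.conn_z S3 conn_empty unfolding z2_def by simp
  have z2e: "z2 = {(j,k)}"
  proof -
    have "z2 = G \<inter> (Id \<union> {j,k} \<times> {j,k})" unfolding z2_def mrg_def S3 conn_empty by simp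
    also have "... = {(j,k)}" using pair2[of G j k] jk Gi jk' by simp
    finally show ?thesis .
  qed
  have l3: "maxmin_label n {} z2 = k - 1" using M3.label_z ij jk' unfolding z2_def by simp
  have mz2: "mins n z2 = {1..n+1} - {k}" using M3.mins_z mins_empty ij jk' unfolding z2_def by simp
  have z2NC: "z2 \<in> NC n G" using NC_iff[OF G] M3.z_bond NCR_single cz2 unfolding z2_def by metis
  interpret M2: mrg_setup n G z1 i j k j
    by unfold_locales (use G M1.z_bond[folded z1_def] mz1 ir jr ij jk' jk cz1 in auto)
  interpret M4: mrg_setup n G z2 i j i k
    by unfold_locales (use G M3.z_bond[folded z2_def] mz2 ir jr ij jk' ik cz2 in auto)
  define H where "H = {(i,k),(j,k)}"
  have S2: "Sab z1 i j = ?T" unfolding Sab_def cz1 using ij jk' by auto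
  have S4: "Sab z2 i j = ?T" unfolding Sab_def cz2 using ij jk' by auto
  have cT: "conn z1 \<union> ?T \<times> ?T = Id \<union> ?T \<times> ?T" "conn z2 \<union> ?T \<times> ?T = Id \<union> ?T \<times> ?T"
    unfolding cz1 cz2 by auto
  have GT: "G \<inter> (Id \<union> ?T \<times> ?T) = H"
    unfolding H_def using pair3[of G i k j] ik jk nij Gi ij jk' by simp
  have H1: "mrg G z1 i j = H" using M2.z_bond M2.conn_z S2 cT GT by simp
  have H2: "mrg G z2 i j = H" using M4.z_bond M4.conn_z S4 cT GT by simp
  have cH: "conn H = Id \<union> ?T \<times> ?T" using M2.conn_z S2 cT H1 by simp
  have HNC: "H \<in> NC n G" using NC_iff[OF G] M2.z_bond H1 cH NCR_single by metis
  have l2: "maxmin_label n z1 H = j - 1" using M2.label_z H1 ij by simp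
  have l4: "maxmin_label n z2 H = j - 1" using M4.label_z H2 ij by simp
  have eNC: "{} \<in> NC n G" by (rule empty_NC[OF G])
  (* the interval from the empty bond to H has no increasing chain *)
  obtain c where mc: "max_chain_interval (NC n G) {} H c" and sc: "sorted_wrt (<) (chain_labels (maxmin_label n) c)"
    using EL[unfolded EL_labeling_def, rule_format, OF eNC HNC empty_subsetI, THEN conjunct1]
    by (meson ex1_implies_ex)
  have Hne: "H \<noteq> {}" unfolding H_def by simp
  obtain w rest where c: "c = {} # w # rest"
  proof (cases c rule: remdups_adj.cases)
    case 1 then show ?thesis using mc unfolding max_chain_interval_def by simp
  next
    case (2 a) then show ?thesis using mc Hne by (auto simp: mci_single)
  next
    case (3 a b rest) then show ?thesis using that mc by (simp add: mci_cons)
  qed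
  have cw: "covers (NC n G) {} w" and tw: "max_chain_interval (NC n G) w H (w # rest)"
    using mc c by (auto simp: mci_cons)
  have wH: "w \<subseteq> H" using mci_le[OF tw] by simp
  have wne: "w \<noteq> {}" using cw unfolding covers_def by blast
  have wnH: "w \<noteq> H"
  proof
    assume "w = H"
    moreover have "{} < z1" "z1 < H" unfolding z1e H_def using ij by auto
    ultimately show False using cw z1NC unfolding covers_def by blast
  qed
  have w12: "w = z1 \<or> w = z2"
    using wH wne wnH unfolding z1e z2e H_def by blast
  obtain w' rest' where r: "rest = w' # rest'"
  proof (cases rest)
    case Nil then show ?thesis using tw wnH by (simp add: mci_single)
  next
    case (Cons a l) then show ?thesis using that by simp
  qed
  have cw': "covers (NC n G) w w'" and tw': "max_chain_interval (NC n G) w' H (w' # rest')"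
    using tw r by (auto simp: mci_cons)
  have w'H: "w' \<subseteq> H" using mci_le[OF tw'] by simp
  have ww': "w < w'" using cw' unfolding covers_def by blast
  have w'eq: "w' = H" using w12 w'H ww' unfolding z1e z2e H_def by blast
  have "maxmin_label n {} w = k - 1" using w12 l1 l3 by blast
  moreover have "maxmin_label n w w' = j - 1" using w12 l2 l4 w'eq by blast
  moreover have "maxmin_label n {} w < maxmin_label n w w'" using sc c r by simp
  ultimately show False using ij jk' by simp
qed

theorem proposition5p10:
  fixes n :: nat and G :: "(nat \<times> nat) set"
  assumes "is_graph n G" and "graph_connected n G" and "graded (NC n G)"
  shows "Sn_EL_labeling n (NC n G) (maxmin_label n) \<longleftrightarrow> perfectly_labeled G"
proof
  assume Sn: "Sn_EL_labeling n (NC n G) (maxmin_label n)"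
  show "perfectly_labeled G"
  proof (rule ccontr)
    assume "\<not> perfectly_labeled G"
    then obtain i j k where "(i,k) \<in> G" "(j,k) \<in> G" "i < j" "j < k" "(i,j) \<notin> G"
      unfolding perfectly_labeled_def by blast
    then have "\<not> EL_labeling (NC n G) (maxmin_label n)" using notPL_notEL[OF assms(1)] by blast
    then show False using Sn unfolding Sn_EL_labeling_def by blast
  qed
next
  assume pl: "perfectly_labeled G"
  interpret PLG n G by unfold_locales (use assms(1) pl in auto)
  show "Sn_EL_labeling n (NC n G) (maxmin_label n)" using Sn[OF assms(2)] .
qed



end
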